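(* Assume $r$ is a prime number distinct from the characteristic of $k$. For $\gamma\in D_\infty^*\cong GL_r(k_\infty)$ put $\mathbb H_\gamma=\{(z,\gamma z):z\in\Omega_r\}\subset\Omega_r\times\Omega_r$. Let $\gamma\in D^*$ with $\mathbb H_\gamma\ne\mathbb H_1$, and suppose $\alpha\in\mathbb H_\gamma\cap\mathbb H_1$. Let $T_\alpha\Omega_r^2\cong\mathbb C_\infty^{r-1}\times\mathbb C_\infty^{r-1}$ be the tangent space of $\Omega_r\times\Omega_r$ at $\alpha$, and $T_\alpha\mathbb H_\gamma$, $T_\alpha\mathbb H_1$ the tangent spaces of $\mathbb H_\gamma$, $\mathbb H_1$ at $\alpha$ viewed as subspaces of it. Then $T_\alpha\mathbb H_\gamma\cap T_\alpha\mathbb H_1=\{0\}$.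
   Context: $k$ is a global function field, $\infty$ a fixed place, $k_\infty$ the completion, $\mathbb C_\infty$ the completion of an algebraic closure of $k_\infty$. $D$ is a central division algebra over $k$ of dimension $r^2$ with $D\otimes_kk_\infty\cong M_r(k_\infty)$, so $D^*\subset GL_r(k_\infty)$. $\Omega_r=\mathbb P^{r-1}(\mathbb C_\infty)\setminus\bigcup(k_\infty\text{-rational hyperplanes})$, viewed as a rigid analytic space (in affine coordinates, the set of $(z_1,\dots,z_{r-1})\in\mathbb C_\infty^{r-1}$ with $c_1z_1+\cdots+c_{r-1}z_{r-1}+c_r\ne0$ for all nonzero $(c_1,\dots,c_r)\in k_\infty^r$), with $GL_r(k_\infty)$ acting by fractional linear transformations. *)

theory Defs
  imports "HOL-Computational_Algebra.Polynomial"
begin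

section \<open>Fields inside an ambient field 'c (playing the role of C_infinity)\<close>

definition is_subfield :: "'c::field set \<Rightarrow> bool" where
  "is_subfield S \<longleftrightarrow> 0 \<in> S \<and> 1 \<in> S \<and>
     (\<forall>x\<in>S. \<forall>y\<in>S. x + y \<in> S \<and> x - y \<in> S \<and> x * y \<in> S) \<and>
     (\<forall>x\<in>S. x \<noteq> 0 \<longrightarrow> inverse x \<in> S)"

definition poly_over :: "'c::field set \<Rightarrow> 'c poly \<Rightarrow> bool" where
  "poly_over S p \<longleftrightarrow> set (coeffs p) \<subseteq> S"

definition transcendental_over :: "'c::field set \<Rightarrow> 'c \<Rightarrow> bool" where
  "transcendental_over F t \<longleftrightarrow> (\<forall>p. poly_over F p \<and> poly p t = 0 \<longrightarrow> p = 0)"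

definition algebraic_over :: "'c::field set \<Rightarrow> 'c \<Rightarrow> bool" where
  "algebraic_over F x \<longleftrightarrow> (\<exists>p. p \<noteq> 0 \<and> poly_over F p \<and> poly p x = 0)"

definition rat_fun_field :: "'c::field set \<Rightarrow> 'c \<Rightarrow> 'c set" where
  "rat_fun_field F t = {poly p t / poly q t | p q. poly_over F p \<and> poly_over F q \<and> poly q t \<noteq> 0}"

definition global_function_field :: "'c::field set \<Rightarrow> bool" where
  "global_function_field k \<longleftrightarrow> is_subfield k \<and>
     (\<exists>F t B. is_subfield F \<and> finite F \<and> F \<subseteq> k \<and> t \<in> k \<and> transcendental_over F t \<and>
        finite B \<and> B \<subseteq> k \<and>
        k = {\<Sum>b\<in>B. c b * b | c. \<forall>b\<in>B. c b \<in> rat_fun_field F t})"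

definition nonarch_abs :: "('c::field \<Rightarrow> real) \<Rightarrow> bool" where
  "nonarch_abs av \<longleftrightarrow> (\<forall>x. av x \<ge> 0) \<and> (\<forall>x. av x = 0 \<longleftrightarrow> x = 0) \<and>
     (\<forall>x y. av (x * y) = av x * av y) \<and> (\<forall>x y. av (x + y) \<le> max (av x) (av y))"

definition av_cauchy :: "('c::field \<Rightarrow> real) \<Rightarrow> (nat \<Rightarrow> 'c) \<Rightarrow> bool" where
  "av_cauchy av X \<longleftrightarrow> (\<forall>e>0. \<exists>N. \<forall>m\<ge>N. \<forall>n\<ge>N. av (X m - X n) < e)"

definition av_converges_to :: "('c::field \<Rightarrow> real) \<Rightarrow> (nat \<Rightarrow> 'c) \<Rightarrow> 'c \<Rightarrow> bool" where
  "av_converges_to av X l \<longleftrightarrow> (\<forall>e>0. \<exists>N. \<forall>n\<ge>N. av (X n - l) < e)"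

definition av_dense_in :: "('c::field \<Rightarrow> real) \<Rightarrow> 'c set \<Rightarrow> 'c set \<Rightarrow> bool" where
  "av_dense_in av A S \<longleftrightarrow> (\<forall>x\<in>S. \<forall>e>0. \<exists>y\<in>A. av (x - y) < e)"

text \<open>
  The standing setting: 'c is C_infinity with absolute value av; it is complete and
  algebraically closed, and the algebraic closure of K_inf is dense in it; K_inf (= k_infinity)
  is a closed (hence complete) subfield in which the global function field k is dense, and
  av is non-trivial on k (so it comes from the place infinity of k).
\<close>
definition function_field_setting :: "('c::field \<Rightarrow> real) \<Rightarrow> 'c set \<Rightarrow> 'c set \<Rightarrow> bool" where
  "function_field_setting av k Kinf \<longleftrightarrow>
     nonarch_abs av \<and>
     (\<forall>X. av_cauchy av X \<longrightarrow> (\<exists>l. av_converges_to av X l)) \<and>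
     (\<forall>p::'c poly. degree p > 0 \<longrightarrow> (\<exists>x. poly p x = 0)) \<and>
     global_function_field k \<and> is_subfield Kinf \<and> k \<subseteq> Kinf \<and>
     (\<exists>x\<in>k. av x \<noteq> 0 \<and> av x \<noteq> 1) \<and>
     (\<forall>X l. (\<forall>n. X n \<in> Kinf) \<and> av_converges_to av X l \<longrightarrow> l \<in> Kinf) \<and>
     av_dense_in av k Kinf \<and>
     av_dense_in av {x. algebraic_over Kinf x} UNIV"

type_synonym 'c mat = "nat \<Rightarrow> nat \<Rightarrow> 'c"
type_synonym 'c vec = "nat \<Rightarrow> 'c"

definition is_mat :: "nat \<Rightarrow> 'c::field mat \<Rightarrow> bool" where
  "is_mat r A \<longleftrightarrow> (\<forall>i j. (i \<ge> r \<or> j \<ge> r) \<longrightarrow> A i j = 0)"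

definition is_vec :: "nat \<Rightarrow> 'c::field vec \<Rightarrow> bool" where
  "is_vec m v \<longleftrightarrow> (\<forall>i\<ge>m. v i = 0)"

definition mat_zero :: "'c::field mat" where "mat_zero = (\<lambda>i j. 0)"

definition mat_one :: "nat \<Rightarrow> 'c::field mat" where
  "mat_one r = (\<lambda>i j. if i = j \<and> i < r then 1 else 0)"

definition mat_add :: "'c::field mat \<Rightarrow> 'c mat \<Rightarrow> 'c mat" where
  "mat_add A B = (\<lambda>i j. A i j + B i j)"

definition mat_scale :: "'c::field \<Rightarrow> 'c mat \<Rightarrow> 'c mat" where
  "mat_scale c A = (\<lambda>i j. c * A i j)"

definition mat_mult :: "nat \<Rightarrow> 'c::field mat \<Rightarrow> 'c mat \<Rightarrow> 'c mat" where
  "mat_mult r A B = (\<lambda>i j. \<Sum>l<r. A i l * B l j)"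

definition mat_vec :: "nat \<Rightarrow> 'c::field mat \<Rightarrow> 'c vec \<Rightarrow> 'c vec" where
  "mat_vec r A v = (\<lambda>i. \<Sum>l<r. A i l * v l)"

text \<open>
  D is given as its image in D \<otimes>_k k_inf = M_r(k_inf): a set of r x r matrices with entries
  in K_inf that is a k-algebra containing k (as scalars), a division ring with centre k,
  and has a k-basis of r^2 elements which is K_inf-linearly independent (so that
  D \<otimes>_k k_inf \<rightarrow> M_r(k_inf) is an isomorphism).
\<close>
definition central_division_algebra_split ::
  "'c::field set \<Rightarrow> 'c set \<Rightarrow> nat \<Rightarrow> 'c mat set \<Rightarrow> bool" where
  "central_division_algebra_split k Kinf r D \<longleftrightarrow>
     (\<forall>A\<in>D. is_mat r A \<and> (\<forall>i j. A i j \<in> Kinf)) \<and>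
     (\<forall>A\<in>D. \<forall>B\<in>D. mat_add A B \<in> D \<and> mat_mult r A B \<in> D) \<and>
     (\<forall>c\<in>k. \<forall>A\<in>D. mat_scale c A \<in> D) \<and>
     mat_one r \<in> D \<and>
     (\<forall>A\<in>D. A \<noteq> mat_zero \<longrightarrow> (\<exists>B\<in>D. mat_mult r A B = mat_one r \<and> mat_mult r B A = mat_one r)) \<and>
     {A\<in>D. \<forall>B\<in>D. mat_mult r A B = mat_mult r B A} = {mat_scale c (mat_one r) | c. c \<in> k} \<and>
     (\<exists>Bs. finite Bs \<and> card Bs = r ^ 2 \<and> Bs \<subseteq> D \<and>
        D = {(\<lambda>i j. \<Sum>B\<in>Bs. c B * B i j) | c. \<forall>B\<in>Bs. c B \<in> k} \<and>
        (\<forall>c. (\<forall>B\<in>Bs. c B \<in> Kinf) \<and> (\<lambda>i j. \<Sum>B\<in>Bs. c B * B i j) = mat_zero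
              \<longrightarrow> (\<forall>B\<in>Bs. c B = 0)))"

text \<open>Affine point z \<in> C^{r-1} (coordinates 0..r-2) to homogeneous vector (z_0,...,z_{r-2},1).\<close>
definition homog :: "nat \<Rightarrow> 'c::field vec \<Rightarrow> 'c vec" where
  "homog r z = (\<lambda>i. if i < r - 1 then z i else if i = r - 1 then 1 else 0)"

definition Omega :: "'c::field set \<Rightarrow> nat \<Rightarrow> 'c vec set" where
  "Omega Kinf r = {z. is_vec (r - 1) z \<and>
     (\<forall>c. (\<forall>i<r. c i \<in> Kinf) \<and> (\<exists>i<r. c i \<noteq> 0) \<longrightarrow>
          (\<Sum>i<r - 1. c i * z i) + c (r - 1) \<noteq> 0)}"

text \<open>Fractional linear transformation: gamma z = affine coordinates of gamma (z,1)^T.\<close>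
definition act :: "nat \<Rightarrow> 'c::field mat \<Rightarrow> 'c vec \<Rightarrow> 'c vec" where
  "act r g z = (let w = mat_vec r g (homog r z) in
                 (\<lambda>i. if i < r - 1 then w i / w (r - 1) else 0))"

definition Hgraph :: "'c::field set \<Rightarrow> nat \<Rightarrow> 'c mat \<Rightarrow> ('c vec \<times> 'c vec) set" where
  "Hgraph Kinf r g = {(z, act r g z) | z. z \<in> Omega Kinf r}"

definition vnorm :: "('c::field \<Rightarrow> real) \<Rightarrow> nat \<Rightarrow> 'c vec \<Rightarrow> real" where
  "vnorm av m v = Max ((\<lambda>i. av (v i)) ` {..<m})"

definition has_deriv_at ::
  "('c::field \<Rightarrow> real) \<Rightarrow> nat \<Rightarrow> ('c vec \<Rightarrow> 'c vec) \<Rightarrow> ('c vec \<Rightarrow> 'c vec) \<Rightarrow> 'c vec \<Rightarrow> bool" where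
  "has_deriv_at av m f L z \<longleftrightarrow>
     (\<forall>v. is_vec m v \<longrightarrow> is_vec m (L v)) \<and>
     (\<forall>v w. is_vec m v \<longrightarrow> is_vec m w \<longrightarrow> L (\<lambda>i. v i + w i) = (\<lambda>i. L v i + L w i)) \<and>
     (\<forall>c v. is_vec m v \<longrightarrow> L (\<lambda>i. c * v i) = (\<lambda>i. c * L v i)) \<and>
     (\<forall>e>0. \<exists>d>0. \<forall>h. is_vec m h \<and> vnorm av m h < d \<longrightarrow>
        vnorm av m (\<lambda>i. f (\<lambda>j. z j + h j) i - f z i - L h i) \<le> e * vnorm av m h)"

text \<open>
  Tangent space at alpha = (z, gamma z) of the graph H_gamma of z \<mapsto> gamma z, as a subspace
  of T_alpha(Omega_r \<times> Omega_r) = C^{r-1} \<times> C^{r-1}: the graph of the derivative.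
\<close>
definition tangent_H :: "('c::field \<Rightarrow> real) \<Rightarrow> nat \<Rightarrow> 'c mat \<Rightarrow> ('c vec \<times> 'c vec) \<Rightarrow> ('c vec \<times> 'c vec) set" where
  "tangent_H av r g \<alpha> = {(v, w). is_vec (r - 1) v \<and>
      (\<exists>L. has_deriv_at av (r - 1) (act r g) L (fst \<alpha>) \<and> w = L v)}"

end

theory Submission
  imports Defs "Jordan_Normal_Form.Jordan_Normal_Form_Uniqueness"
begin

lemma subfield_sum: assumes S: "is_subfield S" and f: "\<And>i. i \<in> A \<Longrightarrow> f i \<in> S"
  shows "sum f A \<in> S"
proof (cases "finite A")
  case True thus ?thesis using f
    by (induction A rule: finite_induct) (use S in \<open>auto simp: is_subfield_def\<close>)
next
  case False thus ?thesis using S by (simp add: is_subfield_def)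
qed

lemma subfield_prod: assumes S: "is_subfield S" and f: "\<And>i. i \<in> A \<Longrightarrow> f i \<in> S"
  shows "prod f A \<in> S"
proof (cases "finite A")
  case True thus ?thesis using f
    by (induction A rule: finite_induct) (use S in \<open>auto simp: is_subfield_def\<close>)
next
  case False thus ?thesis using S by (simp add: is_subfield_def)
qed

lemma subfield_of_nat: assumes S: "is_subfield S" shows "of_nat n \<in> S"
  by (induction n) (use S in \<open>auto simp: is_subfield_def\<close>)

lemma sf_add: "is_subfield S \<Longrightarrow> x \<in> S \<Longrightarrow> y \<in> S \<Longrightarrow> x + y \<in> S"
  unfolding is_subfield_def by blast
lemma sf_diff: "is_subfield S \<Longrightarrow> x \<in> S \<Longrightarrow> y \<in> S \<Longrightarrow> x - y \<in> S"
  unfolding is_subfield_def by blast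
lemma sf_mult: "is_subfield S \<Longrightarrow> x \<in> S \<Longrightarrow> y \<in> S \<Longrightarrow> x * y \<in> S"
  unfolding is_subfield_def by blast
lemma sf_0: "is_subfield S \<Longrightarrow> 0 \<in> S"
  unfolding is_subfield_def by blast
lemma sf_1: "is_subfield S \<Longrightarrow> 1 \<in> S"
  unfolding is_subfield_def by blast
lemma sf_inverse: "is_subfield S \<Longrightarrow> x \<in> S \<Longrightarrow> inverse x \<in> S"
  unfolding is_subfield_def by (metis inverse_zero)

lemma subfield_of_int: assumes S: "is_subfield S" shows "of_int n \<in> S"
proof -
  have "of_int n = of_nat (nat n) - of_nat (nat (-n))" by (cases "n \<ge> 0") auto
  moreover have "(of_nat (nat n) - of_nat (nat (-n)) :: 'a) \<in> S"
    by (rule sf_diff[OF S subfield_of_nat[OF S] subfield_of_nat[OF S]])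
  ultimately show ?thesis by metis
qed

lemma subfield_neg: "is_subfield S \<Longrightarrow> x \<in> S \<Longrightarrow> -x \<in> S"
  using sf_diff[of S 0 x] sf_0[of S] by simp

lemma subfield_div: "is_subfield S \<Longrightarrow> x \<in> S \<Longrightarrow> y \<in> S \<Longrightarrow> x / y \<in> S"
  by (simp add: divide_inverse sf_mult sf_inverse)

lemma poly_over_iff: "0 \<in> S \<Longrightarrow> poly_over S p \<longleftrightarrow> (\<forall>n. coeff p n \<in> S)"
  unfolding poly_over_def
proof
  assume "set (coeffs p) \<subseteq> S" "0 \<in> S"
  thus "\<forall>n. coeff p n \<in> S"
    by (metis coeff_0 coeff_in_coeffs le_degree subset_iff)
next
  assume "\<forall>n. coeff p n \<in> S"
  thus "set (coeffs p) \<subseteq> S" by (auto simp: coeffs_def)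
qed

lemma poly_overI: "is_subfield S \<Longrightarrow> (\<And>n. coeff p n \<in> S) \<Longrightarrow> poly_over S p"
  using poly_over_iff[of S p] by (auto simp: is_subfield_def)

lemma poly_overD: "is_subfield S \<Longrightarrow> poly_over S p \<Longrightarrow> coeff p n \<in> S"
  using poly_over_iff[of S p] by (auto simp: is_subfield_def)

lemma poly_over_add: "is_subfield S \<Longrightarrow> poly_over S p \<Longrightarrow> poly_over S q \<Longrightarrow> poly_over S (p + q)"
  by (rule poly_overI) (auto intro!: sf_add poly_overD)
lemma poly_over_diff: "is_subfield S \<Longrightarrow> poly_over S p \<Longrightarrow> poly_over S q \<Longrightarrow> poly_over S (p - q)"
  by (rule poly_overI) (auto intro!: sf_diff poly_overD)
lemma poly_over_uminus: "is_subfield S \<Longrightarrow> poly_over S p \<Longrightarrow> poly_over S (- p)"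
  by (rule poly_overI) (auto intro!: subfield_neg poly_overD)
lemma poly_over_const: "is_subfield S \<Longrightarrow> c \<in> S \<Longrightarrow> poly_over S [:c:]"
  by (rule poly_overI) (auto simp: coeff_pCons split: nat.splits simp: is_subfield_def)
lemma poly_over_pCons: "is_subfield S \<Longrightarrow> c \<in> S \<Longrightarrow> poly_over S p \<Longrightarrow> poly_over S (pCons c p)"
  by (rule poly_overI) (auto simp: coeff_pCons split: nat.splits dest: poly_overD)
lemma poly_over_monom: "is_subfield S \<Longrightarrow> c \<in> S \<Longrightarrow> poly_over S (monom c k)"
  by (rule poly_overI) (auto simp: coeff_monom simp: is_subfield_def)
lemma poly_over_smult: "is_subfield S \<Longrightarrow> c \<in> S \<Longrightarrow> poly_over S p \<Longrightarrow> poly_over S (Polynomial.smult c p)"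
  by (rule poly_overI) (auto intro!: sf_mult poly_overD)
lemma poly_over_mult: "is_subfield S \<Longrightarrow> poly_over S p \<Longrightarrow> poly_over S q \<Longrightarrow> poly_over S (p * q)"
  by (rule poly_overI) (auto simp: coeff_mult intro!: subfield_sum sf_mult poly_overD)
lemma poly_over_one: "is_subfield S \<Longrightarrow> poly_over S 1"
  using poly_over_const[of S 1] by (simp add: is_subfield_def one_pCons)
lemma poly_over_zero: "is_subfield S \<Longrightarrow> poly_over S 0"
  by (rule poly_overI) (auto simp: is_subfield_def)
lemma poly_over_pderiv: "is_subfield S \<Longrightarrow> poly_over S p \<Longrightarrow> poly_over S (pderiv p)"
  by (rule poly_overI) (auto simp: coeff_pderiv intro!: sf_mult poly_overD sf_add sf_1 subfield_of_nat)
lemma poly_over_sum: assumes S: "is_subfield S" and f: "\<And>i. i \<in> A \<Longrightarrow> poly_over S (f i)"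
  shows "poly_over S (sum f A)"
proof (cases "finite A")
  case True thus ?thesis using f
    by (induction A rule: finite_induct) (auto intro: poly_over_add poly_over_zero S)
next
  case False thus ?thesis using S by (simp add: poly_over_zero)
qed
lemma poly_over_prod: assumes S: "is_subfield S" and f: "\<And>i. i \<in> A \<Longrightarrow> poly_over S (f i)"
  shows "poly_over S (prod f A)"
proof (cases "finite A")
  case True thus ?thesis using f
    by (induction A rule: finite_induct) (auto intro: poly_over_mult poly_over_one S)
next
  case False thus ?thesis using S by (simp add: poly_over_one)
qed

lemma poly_over_divmod:
  fixes g :: "'c::field poly"
  assumes S: "is_subfield S" and g: "poly_over S g" "g \<noteq> 0"
  shows "poly_over S h \<Longrightarrow> \<exists>q \<rho>. poly_over S q \<and> poly_over S \<rho> \<and> h = q * g + \<rho> \<and> (\<rho> = 0 \<or> degree \<rho> < degree g)"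
proof (induction "degree h" arbitrary: h rule: less_induct)
  case less
  show ?case
  proof (cases "h = 0 \<or> degree h < degree g")
    case True
    thus ?thesis using less.prems S by (intro exI[of _ 0] exI[of _ h]) (auto simp: poly_over_zero)
  next
    case False
    hence h0: "h \<noteq> 0" and dg: "degree g \<le> degree h" by auto
    define c where "c = lead_coeff h / lead_coeff g"
    define k where "k = degree h - degree g"
    have cS: "c \<in> S" unfolding c_def using S less.prems g by (intro subfield_div poly_overD) auto
    have c0: "c \<noteq> 0" using h0 g by (simp add: c_def)
    define h' where "h' = h - monom c k * g"
    have dm: "degree (monom c k * g) = degree h"
      using c0 g dg by (simp add: degree_mult_eq degree_monom_eq k_def)
    have lc: "coeff (monom c k * g) (degree h) = lead_coeff h"
      using g dg by (simp add: coeff_monom_mult k_def c_def)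
    have h'S: "poly_over S h'" unfolding h'_def
      by (intro poly_over_diff poly_over_mult poly_over_monom S less.prems cS g)
    have "h' = 0 \<or> degree h' < degree h"
    proof (rule ccontr)
      assume "\<not> ?thesis"
      hence nz: "h' \<noteq> 0" and "degree h' \<ge> degree h" by auto
      moreover have "degree h' \<le> degree h" unfolding h'_def
        using degree_diff_le[of h "degree h" "monom c k * g"] dm by simp
      ultimately have "degree h' = degree h" by simp
      hence "lead_coeff h' = 0" unfolding h'_def using lc by simp
      with nz show False by simp
    qed
    thus ?thesis
    proof
      assume "h' = 0"
      thus ?thesis using S poly_over_monom[OF S cS, of k]
        by (intro exI[of _ "monom c k"] exI[of _ 0]) (auto simp: h'_def poly_over_zero)
    next
      assume "degree h' < degree h"
      from less.hyps[OF this h'S] obtain q \<rho> where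
        q: "poly_over S q" "poly_over S \<rho>" "h' = q * g + \<rho>" "\<rho> = 0 \<or> degree \<rho> < degree g" by blast
      have "h = (q + monom c k) * g + \<rho>" using q(3) unfolding h'_def by (simp add: algebra_simps)
      moreover have "poly_over S (q + monom c k)" using q(1) S cS by (intro poly_over_add poly_over_monom)
      ultimately show ?thesis using q(2,4) by blast
    qed
  qed
qed

definition minp :: "'c::field set \<Rightarrow> 'c \<Rightarrow> 'c poly \<Rightarrow> bool" where
  "minp S x g \<longleftrightarrow> poly_over S g \<and> lead_coeff g = 1 \<and> poly g x = 0 \<and>
     (\<forall>p. p \<noteq> 0 \<and> poly_over S p \<and> poly p x = 0 \<longrightarrow> degree g \<le> degree p)"

lemma ex_min_degree:
  assumes "P (p::'c::zero poly)"
  shows "\<exists>q. P q \<and> (\<forall>p'. P p' \<longrightarrow> degree q \<le> degree p')"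
proof -
  from ex_has_least_nat[of P p degree] assms show ?thesis by blast
qed

lemma minp_exists:
  fixes x :: "'c::field"
  assumes S: "is_subfield S" and p: "p \<noteq> 0" "poly_over S p" "poly p x = 0"
  shows "\<exists>g. minp S x g"
proof -
  obtain q where q: "q \<noteq> 0" "poly_over S q" "poly q x = 0"
    and qm: "\<forall>p'. p' \<noteq> 0 \<and> poly_over S p' \<and> poly p' x = 0 \<longrightarrow> degree q \<le> degree p'"
    using ex_min_degree[of "\<lambda>q. q \<noteq> 0 \<and> poly_over S q \<and> poly q x = 0", OF conjI[OF p(1) conjI[OF p(2,3)]]]
    by blast
  define g where "g = Polynomial.smult (inverse (lead_coeff q)) q"
  have "inverse (lead_coeff q) \<in> S" using S q by (auto intro!: sf_inverse poly_overD)
  hence "poly_over S g" unfolding g_def using S q by (intro poly_over_smult)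
  moreover have "lead_coeff g = 1" using q by (simp add: g_def)
  moreover have "poly g x = 0" using q by (simp add: g_def)
  moreover have "degree g = degree q" using q by (simp add: g_def)
  ultimately show ?thesis using qm unfolding minp_def by (intro exI[of _ g]) auto
qed

lemma minp_nz: "minp S x g \<Longrightarrow> g \<noteq> 0"
  unfolding minp_def by auto

lemma minp_deg: "minp S x g \<Longrightarrow> degree g \<ge> 1"
proof (rule ccontr)
  assume g: "minp S x g" and "\<not> degree g \<ge> 1"
  hence "degree g = 0" by simp
  then obtain c where c: "g = [:c:]" by (metis degree_eq_zeroE)
  thus False using g unfolding minp_def by auto
qed

lemma minp_conj:
  fixes x y :: "'c::field"
  assumes S: "is_subfield S" and g: "minp S x g" and y: "poly g y = 0"
  shows "\<forall>p. p \<noteq> 0 \<and> poly_over S p \<and> poly p y = 0 \<longrightarrow> degree g \<le> degree p"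
proof (intro allI impI)
  fix p assume p: "p \<noteq> 0 \<and> poly_over S p \<and> poly p y = 0"
  obtain m where m: "m \<noteq> 0" "poly_over S m" "poly m y = 0"
    and mm: "\<forall>p'. p' \<noteq> 0 \<and> poly_over S p' \<and> poly p' y = 0 \<longrightarrow> degree m \<le> degree p'"
    using ex_min_degree[of "\<lambda>q. q \<noteq> 0 \<and> poly_over S q \<and> poly q y = 0", OF p] by blast
  have gS: "poly_over S g" using g by (simp add: minp_def)
  obtain q \<rho> where qr: "poly_over S q" "poly_over S \<rho>" "g = q * m + \<rho>" "\<rho> = 0 \<or> degree \<rho> < degree m"
    using poly_over_divmod[OF S m(2,1) gS] by blast
  have "poly \<rho> y = 0" using qr(3) y m(3) by (metis add_0 mult_zero_right poly_add poly_mult)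
  hence \<rho>0: "\<rho> = 0" using mm qr(2,4) by (meson not_le)
  hence gqm: "g = q * m" using qr by simp
  have g0: "g \<noteq> 0" using minp_nz[OF g] .
  hence q0: "q \<noteq> 0" using gqm by auto
  have "poly q x * poly m x = 0" using g gqm by (simp add: minp_def)
  hence "poly m x = 0 \<or> poly q x = 0" by auto
  hence "degree g \<le> degree m"
  proof
    assume "poly m x = 0" thus ?thesis using g m unfolding minp_def by blast
  next
    assume qx: "poly q x = 0"
    hence "degree g \<le> degree q" using g q0 qr(1) unfolding minp_def by blast
    moreover have "degree g = degree q + degree m" using gqm q0 m(1) by (simp add: degree_mult_eq)
    ultimately have "degree m = 0" by simp
    then obtain c where "m = [:c:]" by (metis degree_eq_zeroE)
    thus ?thesis using m(1,3) by simp
  qed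
  thus "degree g \<le> degree p" using mm p by fastforce
qed

lemma minp_dvd:
  fixes x y :: "'c::field"
  assumes S: "is_subfield S" and g: "minp S x g" and y: "poly g y = 0"
    and h: "poly_over S h" "poly h y = 0"
  shows "\<exists>q. poly_over S q \<and> h = q * g"
proof -
  have gS: "poly_over S g" using g by (simp add: minp_def)
  obtain q \<rho> where qr: "poly_over S q" "poly_over S \<rho>" "h = q * g + \<rho>" "\<rho> = 0 \<or> degree \<rho> < degree g"
    using poly_over_divmod[OF S gS minp_nz[OF g] h(1)] by blast
  have "poly \<rho> y = 0" using qr(3) y h(2) by (metis add_0 mult_zero_right poly_add poly_mult)
  hence "\<rho> = 0" using minp_conj[OF S g y] qr(2,4) by (meson not_le)
  thus ?thesis using qr by auto
qed

lemma minp_power: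
  fixes x :: "'c::field"
  assumes S: "is_subfield S" and g: "minp S x g"
    and ac: "\<forall>p::'c poly. degree p > 0 \<longrightarrow> (\<exists>x. poly p x = 0)"
  shows "poly_over S h \<Longrightarrow> lead_coeff h = 1 \<Longrightarrow> (\<forall>y. poly h y = 0 \<longrightarrow> poly g y = 0) \<Longrightarrow> \<exists>e. h = g ^ e"
proof (induction "degree h" arbitrary: h rule: less_induct)
  case less
  show ?case
  proof (cases "degree h = 0")
    case True
    then obtain c where "h = [:c:]" by (metis degree_eq_zeroE)
    thus ?thesis using less.prems by (intro exI[of _ 0]) (simp add: one_pCons)
  next
    case False
    then obtain y where y: "poly h y = 0" using ac by blast
    hence gy: "poly g y = 0" using less.prems by blast
    obtain q where q: "poly_over S q" "h = q * g" using minp_dvd[OF S g gy less.prems(1) y] by blast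
    have g1: "lead_coeff g = 1" using g by (simp add: minp_def)
    have lq: "lead_coeff q = 1" using less.prems(2) q(2) g1 by (simp add: lead_coeff_mult)
    hence q0: "q \<noteq> 0" by auto
    have dh: "degree h = degree q + degree g" using q(2) q0 minp_nz[OF g] by (simp add: degree_mult_eq)
    hence "degree q < degree h" using minp_deg[OF g] by simp
    moreover have "\<forall>y. poly q y = 0 \<longrightarrow> poly g y = 0" using less.prems(3) q(2) by auto
    ultimately obtain e where "q = g ^ e" using less.hyps q(1) lq by blast
    thus ?thesis using q(2) by (intro exI[of _ "Suc e"]) (simp add: mult.commute)
  qed
qed

lemma minp_sep:
  fixes x :: "'c::field"
  assumes S: "is_subfield S" and g: "minp S x g" and d: "(of_nat (degree g) :: 'c) \<noteq> 0"
  shows "Polynomial.order x g = 1"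
proof -
  have gS: "poly_over S g" and g1: "lead_coeff g = 1" and gx: "poly g x = 0" using g by (auto simp: minp_def)
  have dg: "degree g \<ge> 1" using minp_deg[OF g] .
  have "coeff (pderiv g) (degree g - 1) = of_nat (degree g)"
    using dg g1 by (simp add: coeff_pderiv)
  hence pd0: "pderiv g \<noteq> 0" using d by auto
  have "degree (pderiv g) \<le> degree g - 1"
    by (rule degree_le) (auto simp: coeff_pderiv coeff_eq_0)
  hence "poly (pderiv g) x \<noteq> 0" using g pd0 poly_over_pderiv[OF S gS] dg unfolding minp_def by force
  moreover have "Polynomial.order x g \<ge> 2 \<Longrightarrow> poly (pderiv g) x = 0"
  proof -
    assume "Polynomial.order x g \<ge> 2"
    hence "[:-x,1:]^2 dvd g" using order_divides by blast
    then obtain s where "g = [:-x,1:]^2 * s" by (auto elim: dvdE)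
    hence e: "pderiv g = [:-x,1:]^2 * pderiv s + s * pderiv ([:-x,1:]^2)"
      by (simp only: pderiv_mult)
    have "pderiv ([:-x,1:]^Suc 1) = Polynomial.smult (of_nat (Suc 1)) ([:-x,1:]^1) * pderiv [:-x,1:]"
      by (rule pderiv_power_Suc)
    hence "poly (pderiv ([:-x,1:]^2)) x = 0" by (simp add: numeral_2_eq_2)
    thus ?thesis unfolding e by simp
  qed
  moreover have "Polynomial.order x g \<noteq> 0" using gx minp_nz[OF g] order_root by blast
  ultimately show ?thesis by linarith
qed

lemma order_pow: "p \<noteq> 0 \<Longrightarrow> Polynomial.order a (p ^ e) = e * Polynomial.order a (p::'c::field poly)"
  by (induction e) (auto simp: order_mult)



lemma homog_add: assumes "is_vec (r - 1) h" "r \<ge> 1"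
  shows "homog r (\<lambda>j. z j + h j) = (\<lambda>i. homog r z i + h i)"
  using assms unfolding homog_def is_vec_def by (auto simp: fun_eq_iff)

lemma mat_vec_add: "mat_vec r g (\<lambda>i. x i + y i) = (\<lambda>i. mat_vec r g x i + mat_vec r g y i)"
  unfolding mat_vec_def by (auto simp: fun_eq_iff algebra_simps sum.distrib)

lemma mat_vec_scale: "mat_vec r g (\<lambda>i. c * x i) = (\<lambda>i. c * mat_vec r g x i)"
  unfolding mat_vec_def by (auto simp: fun_eq_iff algebra_simps sum_distrib_left)

definition Lact :: "nat \<Rightarrow> (nat \<Rightarrow> nat \<Rightarrow> 'c::field) \<Rightarrow> (nat \<Rightarrow> 'c) \<Rightarrow> (nat \<Rightarrow> 'c) \<Rightarrow> nat \<Rightarrow> 'c" where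
  "Lact r g z h = (\<lambda>i. if i < r - 1 then (mat_vec r g h i - z i * mat_vec r g h (r - 1)) / mat_vec r g (homog r z) (r - 1) else 0)"

lemma act_one: fixes x :: "nat \<Rightarrow> 'c::field" assumes "is_vec (r - 1) x" "r \<ge> 1" shows "act r (mat_one r) x = x"
proof
  fix i
  have mv: "mat_vec r (mat_one r) y = (\<lambda>i. if i < r then y i else 0)" for y :: "nat \<Rightarrow> 'c"
  proof
    fix i
    have "mat_vec r (mat_one r) y i = (\<Sum>l<r. if l = i then (if i < r then y i else 0) else 0)"
      unfolding mat_vec_def mat_one_def by (rule sum.cong) auto
    also have "\<dots> = (if i < r then y i else 0)" by (subst sum.delta) auto
    finally show "mat_vec r (mat_one r) y i = (if i < r then y i else 0)" .
  qed
  show "act r (mat_one r) x i = x i"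
    using assms unfolding act_def Let_def mv homog_def is_vec_def by auto
qed

context fixes av :: "'c::field \<Rightarrow> real" assumes N: "nonarch_abs av"
begin

lemma av_nonneg: "av x \<ge> 0" using N unfolding nonarch_abs_def by blast
lemma av_eq0: "av x = 0 \<longleftrightarrow> x = 0" using N unfolding nonarch_abs_def by blast
lemma av_mult: "av (x * y) = av x * av y" using N unfolding nonarch_abs_def by blast
lemma av_add: "av (x + y) \<le> max (av x) (av y)" using N unfolding nonarch_abs_def by blast
lemma av_0[simp]: "av 0 = 0" using av_eq0 by simp
lemma av_1: "av 1 = 1"
proof -
  have "av 1 = av 1 * av 1" using av_mult[of 1 1] by simp
  moreover have "av 1 \<noteq> 0" using av_eq0[of 1] by simp
  ultimately show ?thesis by (metis mult_cancel_left2)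
qed
lemma av_neg: "av (- x) = av x"
proof -
  have "av (-1) * av (-1) = 1" using av_mult[of "-1" "-1"] av_1 by simp
  hence "(av (-1) - 1) * (av (-1) + 1) = 0" by (simp add: algebra_simps)
  moreover have "av (-1) + 1 > 0" using av_nonneg[of "-1"] by simp
  ultimately have "av (-1) = 1" by simp
  thus ?thesis using av_mult[of "-1" x] by simp
qed
lemma av_diff: "av (x - y) \<le> max (av x) (av y)"
  using av_add[of x "-y"] av_neg[of y] by simp
lemma av_divide: "av (x / y) = av x / av y"
proof (cases "y = 0")
  case True thus ?thesis by simp
next
  case False
  have "av x = av (x / y) * av y" using av_mult[of "x/y" y] False by simp
  thus ?thesis using False av_eq0[of y] by (simp add: field_simps)
qed
lemma av_power: "av (x ^ n) = av x ^ n"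
  by (induction n) (auto simp: av_1 av_mult)

lemma av_sum_le: assumes "finite A" "\<And>i. i \<in> A \<Longrightarrow> av (f i) \<le> c" "0 \<le> c"
  shows "av (sum f A) \<le> c"
  using assms
proof (induction A rule: finite_induct)
  case empty thus ?case by (simp add: av_eq0[THEN iffD2])
next
  case (insert x F)
  have "av (sum f (insert x F)) = av (f x + sum f F)" using insert by simp
  also have "\<dots> \<le> max (av (f x)) (av (sum f F))" by (rule av_add)
  also have "\<dots> \<le> c" using insert by auto
  finally show ?case .
qed

lemma vnorm_ge: "i < m \<Longrightarrow> av (v i) \<le> vnorm av m v"
  unfolding vnorm_def by (rule Max_ge) auto
lemma vnorm_le: "0 < m \<Longrightarrow> (\<And>i. i < m \<Longrightarrow> av (v i) \<le> c) \<Longrightarrow> vnorm av m v \<le> c"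
  unfolding vnorm_def by (subst Max_le_iff) auto
lemma vnorm_nonneg: "0 < m \<Longrightarrow> vnorm av m v \<ge> 0"
  using vnorm_ge[of 0 m v] av_nonneg[of "v 0"] by linarith

lemma deriv_unique:
  assumes t: "0 < av t" "av t < 1" and m: "0 < m"
    and D1: "has_deriv_at av m f L1 z" and D2: "has_deriv_at av m f L2 z" and v: "is_vec m v"
  shows "L1 v = L2 v"
proof
  fix i
  show "L1 v i = L2 v i"
  proof (cases "i < m")
    case False
    thus ?thesis using D1 D2 v unfolding has_deriv_at_def is_vec_def by auto
  next
    case im: True
    define Dl where "Dl = av (L1 v i - L2 v i)"
    define Nv where "Nv = vnorm av m v"
    have Nv0: "Nv \<ge> 0" unfolding Nv_def using vnorm_nonneg[OF m] .
    have key: "Dl \<le> e * Nv" if e: "e > 0" for e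
    proof -
      obtain d1 where d1: "d1 > 0" "\<forall>h. is_vec m h \<and> vnorm av m h < d1 \<longrightarrow>
          vnorm av m (\<lambda>i. f (\<lambda>j. z j + h j) i - f z i - L1 h i) \<le> e * vnorm av m h"
        using D1 e unfolding has_deriv_at_def by blast
      obtain d2 where d2: "d2 > 0" "\<forall>h. is_vec m h \<and> vnorm av m h < d2 \<longrightarrow>
          vnorm av m (\<lambda>i. f (\<lambda>j. z j + h j) i - f z i - L2 h i) \<le> e * vnorm av m h"
        using D2 e unfolding has_deriv_at_def by blast
      define d where "d = min d1 d2"
      have d0: "d > 0" using d1 d2 by (simp add: d_def)
      obtain n where n: "av t ^ n < d / (Nv + 1)"
        using real_arch_pow_inv[of "d / (Nv + 1)" "av t"] d0 Nv0 t by auto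
      define s where "s = t ^ n"
      have avs: "av s = av t ^ n" unfolding s_def by (rule av_power)
      have avs0: "av s > 0" using avs t by simp
      define h where "h = (\<lambda>j. s * v j)"
      have hv: "is_vec m h" using v unfolding h_def is_vec_def by auto
      have hn: "vnorm av m h \<le> av s * Nv"
        by (rule vnorm_le[OF m]) (auto simp: h_def av_mult Nv_def intro!: mult_left_mono vnorm_ge av_nonneg)
      have "av s * Nv < d"
      proof -
        have "av s * Nv \<le> av s * (Nv + 1)" using avs0 by simp
        also have "\<dots> < d" using n avs Nv0 by (simp add: field_simps)
        finally show ?thesis .
      qed
      hence hd: "vnorm av m h < d" using hn by simp
      have r1: "av (f (\<lambda>j. z j + h j) i - f z i - L1 h i) \<le> e * vnorm av m h"
        using d1(2) hv hd vnorm_ge[OF im, of "\<lambda>i. f (\<lambda>j. z j + h j) i - f z i - L1 h i"]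
        unfolding d_def by force
      have r2: "av (f (\<lambda>j. z j + h j) i - f z i - L2 h i) \<le> e * vnorm av m h"
        using d2(2) hv hd vnorm_ge[OF im, of "\<lambda>i. f (\<lambda>j. z j + h j) i - f z i - L2 h i"]
        unfolding d_def by force
      have "L1 h i - L2 h i = (f (\<lambda>j. z j + h j) i - f z i - L2 h i) - (f (\<lambda>j. z j + h j) i - f z i - L1 h i)"
        by simp
      hence "av (L1 h i - L2 h i) \<le> e * vnorm av m h"
        using av_diff[of "f (\<lambda>j. z j + h j) i - f z i - L2 h i" "f (\<lambda>j. z j + h j) i - f z i - L1 h i"] r1 r2
        by simp
      moreover have "L1 h i - L2 h i = s * (L1 v i - L2 v i)"
        using D1 D2 v unfolding has_deriv_at_def h_def by (simp add: algebra_simps)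
      ultimately have "av s * Dl \<le> e * (av s * Nv)"
        unfolding Dl_def using hn e by (metis av_mult mult_left_mono order_trans less_imp_le)
      thus ?thesis using avs0 by (simp add: algebra_simps)
    qed
    have "Dl \<le> 0"
    proof (cases "Nv = 0")
      case True thus ?thesis using key[of 1] by simp
    next
      case False
      hence Np: "Nv > 0" using Nv0 by simp
      show ?thesis
      proof (rule ccontr)
        assume "\<not> Dl \<le> 0"
        hence "Dl > 0" by simp
        hence "Dl \<le> (Dl / (2 * Nv)) * Nv" using key[of "Dl / (2*Nv)"] Np by simp
        also have "\<dots> = Dl / 2" using Np by simp
        finally show False using \<open>Dl > 0\<close> by simp
      qed
    qed
    hence "Dl = 0" using av_nonneg unfolding Dl_def by (meson antisym)
    thus ?thesis unfolding Dl_def using av_eq0 by simp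
  qed
qed


lemma act_deriv:
  assumes r: "2 \<le> r" and z: "is_vec (r - 1) z" and fx: "act r g z = z"
    and lam0: "mat_vec r g (homog r z) (r - 1) \<noteq> 0"
  shows "has_deriv_at av (r - 1) (act r g) (Lact r g z) z"
proof -
  define lam where "lam = mat_vec r g (homog r z) (r - 1)"
  define w where "w = mat_vec r g (homog r z)"
  have m: "0 < r - 1" using r by simp
  have wz: "w i = lam * z i" if "i < r - 1" for i
  proof -
    have "act r g z i = z i" using fx by simp
    hence "w i / lam = z i" using that unfolding act_def w_def lam_def Let_def by simp
    thus ?thesis using lam0 unfolding lam_def by (simp add: field_simps)
  qed
  have wl: "w (r - 1) = lam" unfolding w_def lam_def ..
  define Mg where "Mg = (\<Sum>i<r. \<Sum>l<r. av (g i l))"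
  define Zb where "Zb = 1 + (\<Sum>i<r - 1. av (z i))"
  define C where "C = Mg * Mg * Zb / (av lam * av lam)"
  have alam: "av lam > 0" using lam0 av_eq0[of lam] av_nonneg[of lam] unfolding lam_def by simp
  have Mg0: "Mg \<ge> 0" unfolding Mg_def by (intro sum_nonneg) (auto simp: av_nonneg)
  have Zb1: "Zb \<ge> 1" unfolding Zb_def by (auto intro!: sum_nonneg simp: av_nonneg)
  have C0: "C \<ge> 0" unfolding C_def using Mg0 Zb1 by simp
  have gM: "av (g i l) \<le> Mg" if "i < r" "l < r" for i l
  proof -
    have "av (g i l) \<le> (\<Sum>l<r. av (g i l))" using that by (intro member_le_sum) (auto simp: av_nonneg)
    also have "\<dots> \<le> Mg" unfolding Mg_def using that
      by (intro member_le_sum[of i "{..<r}" "\<lambda>i. \<Sum>l<r. av (g i l)"]) (auto intro!: sum_nonneg simp: av_nonneg)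
    finally show ?thesis .
  qed
  have zZ: "av (z i) \<le> Zb" for i
  proof (cases "i < r - 1")
    case True
    have "av (z i) \<le> (\<Sum>i<r - 1. av (z i))" using True by (intro member_le_sum) (auto simp: av_nonneg)
    thus ?thesis unfolding Zb_def by simp
  next
    case False thus ?thesis using z Zb1 unfolding is_vec_def by simp
  qed
  show ?thesis unfolding has_deriv_at_def
  proof (intro conjI allI impI)
    fix v :: "nat \<Rightarrow> 'c" assume "is_vec (r - 1) v" thus "is_vec (r - 1) (Lact r g z v)"
      unfolding is_vec_def Lact_def by simp
  next
    fix v1 v2 :: "nat \<Rightarrow> 'c"
    show "Lact r g z (\<lambda>i. v1 i + v2 i) = (\<lambda>i. Lact r g z v1 i + Lact r g z v2 i)"
      unfolding Lact_def mat_vec_add by (auto simp: fun_eq_iff add_divide_distrib[symmetric] algebra_simps)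
  next
    fix c and v :: "nat \<Rightarrow> 'c"
    show "Lact r g z (\<lambda>i. c * v i) = (\<lambda>i. c * Lact r g z v i)"
      unfolding Lact_def mat_vec_scale by (auto simp: fun_eq_iff algebra_simps)
  next
    fix e :: real assume e: "e > 0"
    define d where "d = min (av lam / (Mg + 1)) (e / (C + 1))"
    have d0: "d > 0" unfolding d_def using alam Mg0 C0 e by simp
    show "\<exists>d>0. \<forall>h. is_vec (r - 1) h \<and> vnorm av (r - 1) h < d \<longrightarrow>
        vnorm av (r - 1) (\<lambda>i. act r g (\<lambda>j. z j + h j) i - act r g z i - Lact r g z h i) \<le> e * vnorm av (r - 1) h"
    proof (intro exI[of _ d] conjI allI impI d0)
      fix h assume hh: "is_vec (r - 1) h \<and> vnorm av (r - 1) h < d"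
      hence h: "is_vec (r - 1) h" and hd: "vnorm av (r - 1) h < d" by auto
      define nh where "nh = vnorm av (r - 1) h"
      have nh0: "nh \<ge> 0" unfolding nh_def by (rule vnorm_nonneg[OF m])
      define a where "a = mat_vec r g h"
      define b where "b = a (r - 1)"
      have ha: "av (h l) \<le> nh" for l
      proof (cases "l < r - 1")
        case True thus ?thesis unfolding nh_def by (rule vnorm_ge)
      next
        case False thus ?thesis using h nh0 unfolding is_vec_def by simp
      qed
      have aM: "av (a i) \<le> Mg * nh" if "i < r" for i
        unfolding a_def mat_vec_def
      proof (rule av_sum_le)
        fix l assume "l \<in> {..<r}"
        thus "av (g i l * h l) \<le> Mg * nh" using that
          by (simp add: av_mult) (intro mult_mono gM ha Mg0 av_nonneg, auto)
      qed (use Mg0 nh0 in auto)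
      have Mnh: "Mg * nh < av lam"
      proof -
        have "Mg * nh \<le> Mg * (av lam / (Mg + 1))"
          using hd nh0 Mg0 unfolding nh_def d_def by (intro mult_left_mono) auto
        also have "\<dots> < av lam" using alam Mg0 by (simp add: field_simps)
        finally show ?thesis .
      qed
      have bl: "av b < av lam" unfolding b_def using aM[of "r - 1"] Mnh r by simp
      have lb: "av lam \<le> av (lam + b)"
      proof -
        have "av lam = av ((lam + b) - b)" by simp
        also have "\<dots> \<le> max (av (lam + b)) (av b)" by (rule av_diff)
        finally show ?thesis using bl by linarith
      qed
      hence lb0: "lam + b \<noteq> 0" using alam by (auto simp: av_eq0)
      have Cnh: "C * nh \<le> e"
      proof -
        have "C * nh \<le> C * (e / (C + 1))"
          using hd nh0 C0 unfolding nh_def d_def by (intro mult_left_mono) auto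
        also have "\<dots> \<le> e" using C0 e by (simp add: field_simps)
        finally show ?thesis .
      qed
      show "vnorm av (r - 1) (\<lambda>i. act r g (\<lambda>j. z j + h j) i - act r g z i - Lact r g z h i) \<le> e * nh"
      proof (rule vnorm_le[OF m])
        fix i assume i: "i < r - 1"
        have hz: "mat_vec r g (homog r (\<lambda>j. z j + h j)) = (\<lambda>i. w i + a i)"
          unfolding homog_add[OF h] w_def a_def using r by (simp add: homog_add[OF h] mat_vec_add)
        have act1: "act r g (\<lambda>j. z j + h j) i = (lam * z i + a i) / (lam + b)"
          unfolding act_def Let_def hz using i wz[OF i] wl b_def by simp
        have Li: "Lact r g z h i = (a i - z i * b) / lam"
          unfolding Lact_def a_def b_def lam_def using i by simp
        have R: "act r g (\<lambda>j. z j + h j) i - act r g z i - Lact r g z h i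
            = - ((a i - z i * b) * b / (lam * (lam + b)))"
          unfolding act1 Li fx using lb0 lam0 unfolding lam_def[symmetric]
          by (simp add: divide_simps) (simp add: algebra_simps)
        have X: "av (a i - z i * b) \<le> Mg * nh * Zb"
        proof -
          have "av (a i - z i * b) \<le> max (av (a i)) (av (z i * b))" by (rule av_diff)
          moreover have "av (a i) \<le> Mg * nh * Zb"
          proof -
            have "Mg * nh * 1 \<le> Mg * nh * Zb" by (rule mult_left_mono[OF Zb1]) (simp add: Mg0 nh0)
            moreover have "av (a i) \<le> Mg * nh" using aM[of i] i by simp
            ultimately show ?thesis by simp
          qed
          moreover have "av (z i * b) \<le> Mg * nh * Zb"
          proof -
            have "av (z i * b) = av (z i) * av b" by (rule av_mult)
            also have "\<dots> \<le> Zb * (Mg * nh)"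
              using zZ[of i] aM[of "r - 1"] r unfolding b_def by (intro mult_mono) (use Zb1 in \<open>auto simp: av_nonneg\<close>)
            finally show ?thesis by (simp add: ac_simps)
          qed
          ultimately show ?thesis by simp
        qed
        have Y: "av b \<le> Mg * nh" unfolding b_def using aM[of "r - 1"] r by simp
        have "av (act r g (\<lambda>j. z j + h j) i - act r g z i - Lact r g z h i)
              = av (a i - z i * b) * av b / (av lam * av (lam + b))"
          unfolding R av_neg av_divide av_mult ..
        also have "\<dots> \<le> (Mg * nh * Zb) * (Mg * nh) / (av lam * av lam)"
          by (rule frac_le) (use X Y alam lb Zb1 in \<open>auto intro!: mult_mono mult_nonneg_nonneg simp: av_nonneg Mg0 nh0\<close>)
        also have "\<dots> = (C * nh) * nh" unfolding C_def by (simp add: field_simps)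
        also have "\<dots> \<le> e * nh" using Cnh nh0 by (rule mult_right_mono)
        finally show "av (act r g (\<lambda>j. z j + h j) i - act r g z i - Lact r g z h i) \<le> e * nh" .
      qed
    qed
  qed
qed

lemma id_deriv:
  assumes r: "2 \<le> r" and z: "is_vec (r - 1) z"
  shows "has_deriv_at av (r - 1) (act r (mat_one r)) (\<lambda>v. v) z"
  unfolding has_deriv_at_def
proof (intro conjI allI impI)
  fix e :: real assume e: "e > 0"
  show "\<exists>d>0. \<forall>h. is_vec (r - 1) h \<and> vnorm av (r - 1) h < d \<longrightarrow>
       vnorm av (r - 1) (\<lambda>i. act r (mat_one r) (\<lambda>j. z j + h j) i - act r (mat_one r) z i - h i) \<le> e * vnorm av (r - 1) h"
  proof (intro exI[of _ 1] conjI allI impI)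
    fix h assume h: "is_vec (r - 1) h \<and> vnorm av (r - 1) h < 1"
    have zh: "is_vec (r - 1) (\<lambda>j. z j + h j)" using z h unfolding is_vec_def by simp
    have "vnorm av (r - 1) (\<lambda>i. act r (mat_one r) (\<lambda>j. z j + h j) i - act r (mat_one r) z i - h i) \<le> 0"
      using act_one[OF zh] act_one[OF z] r by (intro vnorm_le) auto
    moreover have "0 \<le> e * vnorm av (r - 1) h" using e vnorm_nonneg[of "r - 1" h] r by simp
    ultimately show "vnorm av (r - 1) (\<lambda>i. act r (mat_one r) (\<lambda>j. z j + h j) i - act r (mat_one r) z i - h i) \<le> e * vnorm av (r - 1) h"
      by linarith
  qed simp
qed (auto simp: is_vec_def)

end


lemma sum_single_nz:
  fixes n :: nat
  assumes "j < n" "\<And>i. i < n \<Longrightarrow> i \<noteq> j \<Longrightarrow> f i = 0"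
  shows "(\<Sum>i<n. f i) = (f j :: 'a::comm_monoid_add)"
proof -
  have "(\<Sum>i<n. f i) = f j + (\<Sum>i\<in>{..<n} - {j}. f i)"
    using assms(1) by (subst sum.remove[of _ j]) auto
  also have "(\<Sum>i\<in>{..<n} - {j}. f i) = 0" using assms(2) by (intro sum.neutral) auto
  finally show ?thesis by simp
qed

lemma dbl_root:
  fixes G :: "'a::field Matrix.mat"
  assumes G: "G \<in> carrier_mat n n" and U: "U \<in> carrier_vec n" and V: "V \<in> carrier_vec n"
    and GV: "G *\<^sub>v V = lam \<cdot>\<^sub>v V" and GU: "G *\<^sub>v U = lam \<cdot>\<^sub>v U + b \<cdot>\<^sub>v V"
    and n: "n \<ge> 2" and V1: "V $ (n - 1) = 1" and U1: "U $ (n - 1) = 0" and U0: "U \<noteq> 0\<^sub>v n"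
  shows "[:-lam, 1:]^2 dvd char_poly G"
proof -
  have "\<exists>i<n. U $ i \<noteq> 0"
  proof (rule ccontr)
    assume "\<not> ?thesis"
    hence "U = 0\<^sub>v n" using U by (intro eq_vecI) auto
    thus False using U0 by simp
  qed
  then obtain i0 where i0: "i0 < n" "U $ i0 \<noteq> 0" by blast
  have "i0 \<noteq> n - 1" using i0 U1 by auto
  hence ex: "\<exists>i. i < n - 1 \<and> U $ i \<noteq> 0" using i0 by (intro exI[of _ i0]) auto
  define j where "j = Max {i. i < n - 1 \<and> U $ i \<noteq> 0}"
  have fin: "finite {i. i < n - 1 \<and> U $ i \<noteq> 0}" by simp
  have jin: "j \<in> {i. i < n - 1 \<and> U $ i \<noteq> 0}" unfolding j_def using ex fin by (intro Max_in) auto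
  hence jn: "j < n - 1" and Uj: "U $ j \<noteq> 0" by auto
  have jmax: "i < n \<Longrightarrow> j < i \<Longrightarrow> U $ i = 0" for i
  proof (rule ccontr)
    assume i: "i < n" "j < i" "U $ i \<noteq> 0"
    have "i \<noteq> n - 1" using U1 i by auto
    hence "i \<in> {i. i < n - 1 \<and> U $ i \<noteq> 0}" using i by auto
    hence "i \<le> j" unfolding j_def using fin by (intro Max_ge) auto
    thus False using i by simp
  qed
  define P where "P = mat n n (\<lambda>(i, c). if c = j then U $ i else if c = n - 1 then V $ i else if i = c then 1 else (0::'a))"
  have P: "P \<in> carrier_mat n n" unfolding P_def by simp
  have ut: "upper_triangular P" unfolding upper_triangular_def P_def using jmax jn by auto
  have "det P = (\<Prod>i = 0..<n. P $$ (i, i))"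
    using det_upper_triangular[OF ut P] prod_list_diag_prod[of P] P by simp
  also have "\<dots> \<noteq> 0"
    unfolding P_def using Uj V1 jn by (subst prod_zero_iff) auto
  finally have dP: "det P \<noteq> 0" .
  from det_non_zero_imp_unit[OF P dP, of undefined]
  obtain Q where Q: "Q \<in> carrier_mat n n" and PQ: "P * Q = 1\<^sub>m n" and QP: "Q * P = 1\<^sub>m n"
    unfolding Units_def ring_mat_simps by (auto simp: ring_mat_def)
  define B where "B = Q * G * P"
  have B: "B \<in> carrier_mat n n" unfolding B_def using Q G P by auto
  have sim: "similar_mat G B"
  proof (rule similar_matI[of _ _ P Q n])
    show "{G, B, P, Q} \<subseteq> carrier_mat n n" using G B P Q by auto
    show "G = P * B * Q"
    proof -
      have "P * B * Q = (P * Q) * G * (P * Q)" unfolding B_def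
        using P Q G by (simp add: assoc_mult_mat[of _ n n _ n _ n])
      also have "\<dots> = G" using PQ G by simp
      finally show ?thesis by simp
    qed
  qed (use PQ QP in auto)
  have colj: "col P j = U" using U jn unfolding P_def by (intro eq_vecI) auto
  have coll: "col P (n - 1) = V" using V jn unfolding P_def by (intro eq_vecI) auto
  have Bcol: "B $$ (i, c) = lam * (Q * P) $$ (i, c) + b * (Q * P) $$ (i, n - 1)"
    if i: "i < n" and c: "c = j" for i c
  proof -
    have "B $$ (i, c) = (Q * (G * P)) $$ (i, c)" unfolding B_def using Q G P
      by (simp add: assoc_mult_mat[of _ n n _ n _ n])
    also have "\<dots> = row Q i \<bullet> col (G * P) c" using i c jn Q G P by (intro index_mult_mat(1)) auto
    also have "\<dots> = row Q i \<bullet> (G *\<^sub>v col P c)" using i c jn Q G P by (subst col_mult2[OF G P]) auto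
    also have "\<dots> = row Q i \<bullet> (lam \<cdot>\<^sub>v col P j + b \<cdot>\<^sub>v col P (n - 1))" unfolding colj coll c GU ..
    also have "\<dots> = lam * (row Q i \<bullet> col P j) + b * (row Q i \<bullet> col P (n - 1))"
      using Q P i jn U V colj coll by (subst scalar_prod_add_distrib[of _ n]) auto
    also have "\<dots> = lam * (Q * P) $$ (i, c) + b * (Q * P) $$ (i, n - 1)"
      using Q P i jn c n by simp
    finally show ?thesis .
  qed
  have Bcol2: "B $$ (i, n - 1) = lam * (Q * P) $$ (i, n - 1)" if i: "i < n" for i
  proof -
    have "B $$ (i, n - 1) = (Q * (G * P)) $$ (i, n - 1)" unfolding B_def using Q G P
      by (simp add: assoc_mult_mat[of _ n n _ n _ n])
    also have "\<dots> = row Q i \<bullet> col (G * P) (n - 1)" using i n Q G P by (intro index_mult_mat(1)) auto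
    also have "\<dots> = row Q i \<bullet> (G *\<^sub>v col P (n - 1))" using i n Q G P by (subst col_mult2[OF G P]) auto
    also have "\<dots> = row Q i \<bullet> (lam \<cdot>\<^sub>v col P (n - 1))" unfolding coll GV ..
    also have "\<dots> = lam * (row Q i \<bullet> col P (n - 1))"
      using Q P i n V coll by simp
    also have "\<dots> = lam * (Q * P) $$ (i, n - 1)" using Q P i n by simp
    finally show ?thesis .
  qed
  have Bj: "B $$ (i, j) = (if i = j then lam else 0) + (if i = n - 1 then b else 0)" if "i < n" for i
    using Bcol[OF that refl] that jn unfolding QP by simp
  have Bl: "B $$ (i, n - 1) = (if i = n - 1 then lam else 0)" if "i < n" for i
    using Bcol2[OF that] that n unfolding QP by simp
  define C where "C = char_poly_matrix B"
  have C: "C \<in> carrier_mat n n" unfolding C_def using B by simp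
  have Cij: "C $$ (i, c) = (if i = c then [:0,1:] else 0) + [:- B $$ (i, c):]" if "i < n" "c < n" for i c
    unfolding C_def char_poly_matrix_def using that B by auto
  have n1: "n - 1 < n" using n by simp
  have "det C = (\<Sum>i<n. C $$ (i, n - 1) * cofactor C i (n - 1))"
    by (rule laplace_expansion_column[OF C n1])
  also have "\<dots> = C $$ (n - 1, n - 1) * cofactor C (n - 1) (n - 1)"
  proof (rule sum_single_nz[OF n1])
    fix i assume i: "i < n" "i \<noteq> n - 1"
    have "C $$ (i, n - 1) = 0" using Cij[OF i(1) n1] Bl[OF i(1)] i by simp
    thus "C $$ (i, n - 1) * cofactor C i (n - 1) = 0" by simp
  qed
  also have "C $$ (n - 1, n - 1) = [:-lam, 1:]" using Cij[OF n1 n1] Bl[OF n1] by simp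
  finally have d1: "det C = [:-lam, 1:] * cofactor C (n - 1) (n - 1)" .
  define M where "M = mat_delete C (n - 1) (n - 1)"
  have M: "M \<in> carrier_mat (n - 1) (n - 1)" unfolding M_def using mat_delete_carrier[OF C] .
  have Mij: "M $$ (i, c) = C $$ (i, c)" if "i < n - 1" "c < n - 1" for i c
    unfolding M_def mat_delete_def using that C by auto
  have "det M = (\<Sum>i<n - 1. M $$ (i, j) * cofactor M i j)"
    by (rule laplace_expansion_column[OF M jn])
  also have "\<dots> = M $$ (j, j) * cofactor M j j"
  proof (rule sum_single_nz[OF jn])
    fix i assume i: "i < n - 1" "i \<noteq> j"
    have "M $$ (i, j) = 0" using Mij[OF i(1) jn] Cij[of i j] Bj[of i] i jn by simp
    thus "M $$ (i, j) * cofactor M i j = 0" by simp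
  qed
  also have "M $$ (j, j) = [:-lam, 1:]" using jn by (simp add: Mij Cij Bj)
  finally have d2: "det M = [:-lam, 1:] * cofactor M j j" .
  have "char_poly G = det C" unfolding C_def char_poly_def[symmetric] by (rule char_poly_similar[OF sim])
  also have "\<dots> = [:-lam, 1:] * ((-1) ^ (n - 1 + (n - 1)) * det M)" unfolding d1 cofactor_def M_def ..
  also have "\<dots> = [:-lam, 1:]^2 * ((-1) ^ (n - 1 + (n - 1)) * cofactor M j j)" unfolding d2
    unfolding power2_eq_square by (simp only: mult_ac)
  finally show ?thesis by simp
qed


fun mpe :: "'a::field list \<Rightarrow> 'a Matrix.mat \<Rightarrow> nat \<Rightarrow> 'a Matrix.mat" where
  "mpe [] A n = 0\<^sub>m n n"
| "mpe (c # cs) A n = c \<cdot>\<^sub>m 1\<^sub>m n + A * mpe cs A n"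

fun hv :: "'a::field list \<Rightarrow> 'a \<Rightarrow> 'a" where
  "hv [] x = 0"
| "hv (c # cs) x = c + x * hv cs x"

lemma hv_horner: "hv cs x = horner_sum id x cs"
  by (induction cs) auto

lemma poly_hv: "poly p x = hv (coeffs p) x"
  unfolding poly_def hv_horner ..

lemma smult_one_mat_vec:
  fixes c :: "'a::field"
  assumes w: "w \<in> carrier_vec n" shows "(c \<cdot>\<^sub>m 1\<^sub>m n) *\<^sub>v w = c \<cdot>\<^sub>v w"
proof (rule eq_vecI)
  fix i assume "i < dim_vec (c \<cdot>\<^sub>v w)"
  hence i: "i < n" using w by simp
  have "((c \<cdot>\<^sub>m 1\<^sub>m n) *\<^sub>v w) $ i = (\<Sum>l\<in>{0..<n}. (c \<cdot>\<^sub>m 1\<^sub>m n) $$ (i, l) * w $ l)"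
    using i w by (auto simp: scalar_prod_def intro!: sum.cong)
  also have "\<dots> = (\<Sum>l\<in>{0..<n}. if l = i then c * w $ i else 0)"
    using i by (intro sum.cong) auto
  also have "\<dots> = c * w $ i" using i by simp
  finally show "((c \<cdot>\<^sub>m 1\<^sub>m n) *\<^sub>v w) $ i = (c \<cdot>\<^sub>v w) $ i" using i w by simp
qed (use w in simp)

lemma mpe_carrier: "A \<in> carrier_mat n n \<Longrightarrow> mpe cs A n \<in> carrier_mat n n"
  by (induction cs) auto

lemma mpe_eig:
  assumes A: "A \<in> carrier_mat n n" and w: "w \<in> carrier_vec n" and Aw: "A *\<^sub>v w = \<mu> \<cdot>\<^sub>v w"
  shows "mpe cs A n *\<^sub>v w = hv cs \<mu> \<cdot>\<^sub>v w"
proof (induction cs)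
  case Nil thus ?case using w by (intro eq_vecI) auto
next
  case (Cons c cs)
  have M: "mpe cs A n \<in> carrier_mat n n" using mpe_carrier[OF A] .
  have "mpe (c # cs) A n *\<^sub>v w = (c \<cdot>\<^sub>m 1\<^sub>m n) *\<^sub>v w + (A * mpe cs A n) *\<^sub>v w"
    using A M w by (simp add: add_mult_distrib_mat_vec[of _ n n])
  also have "(A * mpe cs A n) *\<^sub>v w = A *\<^sub>v (hv cs \<mu> \<cdot>\<^sub>v w)"
    using A M w Cons by simp
  also have "\<dots> = hv cs \<mu> \<cdot>\<^sub>v (\<mu> \<cdot>\<^sub>v w)" using A w Aw by (simp add: mult_mat_vec)
  also have "(c \<cdot>\<^sub>m 1\<^sub>m n) *\<^sub>v w = c \<cdot>\<^sub>v w" using w by (rule smult_one_mat_vec)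
  finally show ?case using w by (intro eq_vecI) (auto simp: algebra_simps)
qed

lemma mpe_entries:
  assumes S: "is_subfield S" and A: "A \<in> carrier_mat n n" and AS: "\<And>i j. i < n \<Longrightarrow> j < n \<Longrightarrow> A $$ (i, j) \<in> S"
  shows "set cs \<subseteq> S \<Longrightarrow> i < n \<Longrightarrow> j < n \<Longrightarrow> mpe cs A n $$ (i, j) \<in> S"
proof (induction cs arbitrary: i j)
  case Nil thus ?case using S by (simp add: sf_0)
next
  case (Cons c cs)
  have M: "mpe cs A n \<in> carrier_mat n n" using mpe_carrier[OF A] .
  have "mpe (c # cs) A n $$ (i, j) = c * (if i = j then 1 else 0) + (\<Sum>l \<in> {0..<n}. A $$ (i, l) * mpe cs A n $$ (l, j))"
    using Cons.prems A M by (simp add: scalar_prod_def)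
  also have "\<dots> \<in> S" using Cons S AS
    by (intro sf_add sf_mult subfield_sum) (auto simp: sf_0 sf_1)
  finally show ?case .
qed

lemma mpe_lin: assumes A: "A \<in> carrier_mat n n" shows "mpe [c0, 1] A n = c0 \<cdot>\<^sub>m 1\<^sub>m n + A"
proof -
  have "mpe [1] A n = 1\<^sub>m n" using A by (intro eq_matI) (auto simp: scalar_prod_def)
  thus ?thesis using A by simp
qed

lemma omega_row:
  assumes z: "z \<in> Omega S r" and r: "r \<ge> 1" and cS: "\<forall>l<r. c l \<in> S"
    and s: "(\<Sum>l<r. c l * homog r z l) = 0"
  shows "\<forall>l<r. c l = 0"
proof (rule ccontr)
  assume "\<not> ?thesis"
  hence ex: "\<exists>l<r. c l \<noteq> 0" by auto
  have "(\<Sum>l<r. c l * homog r z l) = (\<Sum>l<r - 1. c l * homog r z l) + c (r - 1) * homog r z (r - 1)"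
    using r sum.lessThan_Suc[of "\<lambda>l. c l * homog r z l" "r - 1"] by simp
  also have "(\<Sum>l<r - 1. c l * homog r z l) = (\<Sum>l<r - 1. c l * z l)"
    by (rule sum.cong) (auto simp: homog_def)
  also have "homog r z (r - 1) = 1" by (simp add: homog_def)
  finally have "(\<Sum>l<r - 1. c l * z l) + c (r - 1) = 0" using s by simp
  moreover have "(\<Sum>l<r - 1. c l * z l) + c (r - 1) \<noteq> 0"
    using z cS ex unfolding Omega_def by blast
  ultimately show False by simp
qed

lemma mat_vec_jnf:
  "mat r r (\<lambda>(i, j). g i j) *\<^sub>v vec r x = vec r (mat_vec r g x)"
  by (intro eq_vecI) (simp_all add: scalar_prod_def mat_vec_def atLeast0LessThan)


lemma core:
  fixes g :: "nat \<Rightarrow> nat \<Rightarrow> 'c::field" and S :: "'c set"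
  assumes S: "is_subfield S" and ac: "\<forall>p::'c poly. degree p > 0 \<longrightarrow> (\<exists>x. poly p x = 0)"
    and r: "prime r" and ch: "(of_nat r :: 'c) \<noteq> 0"
    and ent: "\<forall>i j. g i j \<in> S"
    and z: "z \<in> Omega S r" and fx: "act r g z = z"
    and lam0: "mat_vec r g (homog r z) (r - 1) \<noteq> 0"
    and u: "is_vec (r - 1) u" "u \<noteq> (\<lambda>i. 0)" "Lact r g z u = u"
  shows "\<exists>a. \<forall>i<r. \<forall>l<r. g i l = (if i = l then a else 0)"
proof -
  have r2: "r \<ge> 2" using r by (simp add: prime_ge_2_nat)
  define lam where "lam = mat_vec r g (homog r z) (r - 1)"
  define w where "w = mat_vec r g (homog r z)"
  define a where "a = mat_vec r g u"
  define b where "b = a (r - 1)"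
  have zv: "is_vec (r - 1) z" using z unfolding Omega_def by simp
  have wz: "w i = lam * homog r z i" if "i < r" for i
  proof (cases "i < r - 1")
    case True
    have "act r g z i = z i" using fx by simp
    hence "w i / lam = z i" using True unfolding act_def w_def lam_def Let_def by simp
    thus ?thesis using lam0 True unfolding lam_def by (simp add: field_simps homog_def)
  next
    case False
    hence "i = r - 1" using that by simp
    thus ?thesis unfolding w_def lam_def homog_def by simp
  qed
  have au: "a i = lam * u i + b * homog r z i" if "i < r" for i
  proof (cases "i < r - 1")
    case True
    have "Lact r g z u i = u i" using u(3) by simp
    hence "(a i - z i * b) / lam = u i" using True unfolding Lact_def a_def b_def lam_def by simp
    thus ?thesis using lam0 True unfolding lam_def by (simp add: field_simps homog_def)
  next
    case False
    hence "i = r - 1" using that by simp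
    thus ?thesis using u(1) unfolding b_def homog_def is_vec_def by simp
  qed
  define G where "G = mat r r (\<lambda>(i, j). g i j)"
  define V where "V = vec r (homog r z)"
  define U where "U = vec r u"
  have G: "G \<in> carrier_mat r r" unfolding G_def by simp
  have V: "V \<in> carrier_vec r" unfolding V_def by simp
  have U: "U \<in> carrier_vec r" unfolding U_def by simp
  have GV: "G *\<^sub>v V = lam \<cdot>\<^sub>v V"
    unfolding G_def V_def mat_vec_jnf w_def[symmetric] using wz by (intro eq_vecI) auto
  have GU: "G *\<^sub>v U = lam \<cdot>\<^sub>v U + b \<cdot>\<^sub>v V"
    unfolding G_def U_def V_def mat_vec_jnf a_def[symmetric] using au by (intro eq_vecI) auto
  have V1: "V $ (r - 1) = 1" using r2 unfolding V_def homog_def by simp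
  have U1: "U $ (r - 1) = 0" using r2 u(1) unfolding U_def is_vec_def by simp
  have U0: "U \<noteq> 0\<^sub>v r"
  proof
    assume "U = 0\<^sub>v r"
    hence "u i = 0" for i
    proof (cases "i < r")
      case True
      have "U $ i = 0" using \<open>U = 0\<^sub>v r\<close> True by simp
      thus ?thesis unfolding U_def using True by simp
    next
      case False thus ?thesis using u(1) unfolding is_vec_def by simp
    qed
    thus False using u(2) by auto
  qed
  have dbl: "[:-lam, 1:]^2 dvd char_poly G" by (rule dbl_root[OF G U V GV GU r2 V1 U1 U0])
  define \<chi> where "\<chi> = char_poly G"
  have \<chi>S: "poly_over S \<chi>"
  proof -
    have "\<chi> = (\<Sum>p\<in>{p. p permutes {0..<r}}. signof p * (\<Prod>i = 0..<r. char_poly_matrix G $$ (i, p i)))"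
      unfolding \<chi>_def char_poly_def by (rule det_def'[OF char_poly_matrix_closed[OF G]])
    also have "poly_over S \<dots>"
    proof (intro poly_over_sum poly_over_mult poly_over_prod S)
      fix p assume "p \<in> {p. p permutes {0..<r}}"
      show "poly_over S (signof p)" unfolding sign_def
        using poly_over_one[OF S] poly_over_uminus[OF S poly_over_one[OF S]] by auto
    next
      fix p i assume p: "p \<in> {p. p permutes {0..<r}}" and i: "i \<in> {0..<r}"
      have pi: "p i < r" using p i by (auto dest: permutes_in_image)
      have "char_poly_matrix G $$ (i, p i) = (if i = p i then [:0,1:] else 0) + [:- g i (p i):]"
        unfolding char_poly_matrix_def G_def using i pi by auto
      thus "poly_over S (char_poly_matrix G $$ (i, p i))"
        using S ent by (auto intro!: poly_over_add poly_over_const poly_over_zero poly_over_pCons subfield_neg sf_0 sf_1)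
    qed
    finally show ?thesis .
  qed
  have \<chi>m: "degree \<chi> = r" "coeff \<chi> r = 1" using degree_monic_char_poly[OF G] unfolding \<chi>_def by auto
  hence \<chi>0: "\<chi> \<noteq> 0" by auto
  have V0: "V \<noteq> 0\<^sub>v r"
  proof
    assume "V = 0\<^sub>v r"
    hence "V $ (r - 1) = 0" using r2 by simp
    thus False using V1 by simp
  qed
  have evl: "eigenvalue G lam" unfolding eigenvalue_def eigenvector_def
    using V GV V0 G by (intro exI[of _ V]) auto
  have \<chi>lam: "poly \<chi> lam = 0" using evl eigenvalue_root_char_poly[OF G] unfolding \<chi>_def by simp
  obtain q where q: "minp S lam q" using minp_exists[OF S \<chi>0 \<chi>S \<chi>lam] by blast
  have qS: "poly_over S q" and q1: "lead_coeff q = 1" and qlam: "poly q lam = 0" using q by (auto simp: minp_def)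
  define M where "M = mpe (coeffs q) G r"
  have M: "M \<in> carrier_mat r r" unfolding M_def by (rule mpe_carrier[OF G])
  have MS: "M $$ (i, j) \<in> S" if "i < r" "j < r" for i j
    unfolding M_def using qS that ent
    by (intro mpe_entries[OF S G]) (auto simp: poly_over_def G_def)
  have MV: "M *\<^sub>v V = 0\<^sub>v r"
  proof -
    have e1: "M *\<^sub>v V = hv (coeffs q) lam \<cdot>\<^sub>v V" unfolding M_def by (rule mpe_eig[OF G V GV])
    have e2: "hv (coeffs q) lam = 0" using qlam by (simp only: poly_hv)
    have e3: "0 \<cdot>\<^sub>v V = 0\<^sub>v r" using V by (intro eq_vecI) auto
    show ?thesis unfolding e1 e2 e3 ..
  qed
  have M0: "M = 0\<^sub>m r r"
  proof (rule eq_matI)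
    fix i j assume ij: "i < dim_row (0\<^sub>m r r)" "j < dim_col (0\<^sub>m r r)"
    hence i: "i < r" and j: "j < r" by auto
    have dM: "dim_row M = r" "dim_col M = r" using M by auto
    have z0: "(M *\<^sub>v V) $ i = 0" unfolding MV using i by simp
    have idx: "(M *\<^sub>v V) $ i = row M i \<bullet> V" by (rule index_mult_mat_vec) (simp add: dM i)
    have rowV: "row M i \<bullet> V = (\<Sum>l\<in>{0..<r}. M $$ (i, l) * homog r z l)"
      unfolding scalar_prod_def
    proof (rule sum.cong)
      show "{0..<dim_vec V} = {0..<r}" using V by simp
    next
      fix l assume "l \<in> {0..<r}"
      hence l: "l < r" by simp
      show "row M i $ l * V $ l = M $$ (i, l) * homog r z l"
        using l i dM unfolding V_def by simp
    qed
    have "(\<Sum>l\<in>{0..<r}. M $$ (i, l) * homog r z l) = 0"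
      using z0 unfolding idx rowV .
    hence s0: "(\<Sum>l<r. M $$ (i, l) * homog r z l) = 0" unfolding atLeast0LessThan .
    have MSi: "\<forall>l<r. M $$ (i, l) \<in> S" using MS[OF i] by blast
    have r1: "r \<ge> 1" using r2 by simp
    have "\<forall>l<r. M $$ (i, l) = 0" by (rule omega_row[OF z r1 MSi s0])
    thus "M $$ (i, j) = 0\<^sub>m r r $$ (i, j)" using i j by simp
  next
    show "dim_row M = dim_row (0\<^sub>m r r)" using M by simp
    show "dim_col M = dim_col (0\<^sub>m r r)" using M by simp
  qed
  have roots: "\<forall>y. poly \<chi> y = 0 \<longrightarrow> poly q y = 0"
  proof (intro allI impI)
    fix y assume "poly \<chi> y = 0"
    hence "eigenvalue G y" using eigenvalue_root_char_poly[OF G] unfolding \<chi>_def by simp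
    then obtain x where x: "x \<in> carrier_vec r" "x \<noteq> 0\<^sub>v r" "G *\<^sub>v x = y \<cdot>\<^sub>v x"
      unfolding eigenvalue_def eigenvector_def using G by auto
    have "M *\<^sub>v x = hv (coeffs q) y \<cdot>\<^sub>v x" unfolding M_def by (rule mpe_eig[OF G x(1) x(3)])
    moreover have "0\<^sub>m r r *\<^sub>v x = 0\<^sub>v r" using x(1) by (intro eq_vecI) (auto simp: scalar_prod_def)
    ultimately have "hv (coeffs q) y \<cdot>\<^sub>v x = 0\<^sub>v r" using M0 by simp
    hence "hv (coeffs q) y = 0 \<or> x = 0\<^sub>v r"
    proof -
      assume hx: "hv (coeffs q) y \<cdot>\<^sub>v x = 0\<^sub>v r"
      { assume h0: "hv (coeffs q) y \<noteq> 0"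
        have "x = 0\<^sub>v r"
        proof (rule eq_vecI)
          fix i assume "i < dim_vec (0\<^sub>v r :: 'c Matrix.vec)"
          hence i: "i < r" by simp
          have "(hv (coeffs q) y \<cdot>\<^sub>v x) $ i = 0" using hx i by simp
          hence "hv (coeffs q) y * x $ i = 0" using i x(1) by simp
          thus "x $ i = 0\<^sub>v r $ i" using h0 i by simp
        qed (use x(1) in simp) }
      thus ?thesis by blast
    qed
    hence "poly q y = 0 \<or> x = 0\<^sub>v r" by (simp only: poly_hv)
    thus "poly q y = 0" using x(2) by blast
  qed
  obtain e where e: "\<chi> = q ^ e" using minp_power[OF S q ac \<chi>S] \<chi>m roots by auto
  have q0: "q \<noteq> 0" using minp_nz[OF q] .
  have rde: "r = e * degree q" using \<chi>m(1) unfolding e by (simp add: degree_power_eq[OF q0] mult.commute)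
  have ord2: "2 \<le> Polynomial.order lam \<chi>" using dbl \<chi>0 unfolding \<chi>_def order_divides by auto
  have dq: "degree q = 1"
  proof (rule ccontr)
    assume "degree q \<noteq> 1"
    moreover have "degree q dvd r" using rde by simp
    ultimately have "degree q = r" using r unfolding prime_nat_iff by blast
    hence e1: "e = 1" using rde r2 by (cases "degree q = 0") auto
    have "Polynomial.order lam q = 1" using minp_sep[OF S q] ch \<open>degree q = r\<close> by simp
    hence "Polynomial.order lam \<chi> = 1" unfolding e e1 by simp
    thus False using ord2 by simp
  qed
  define c0 where "c0 = coeff q 0"
  have c0: "q = [:c0, 1:]"
  proof (rule poly_eqI)
    fix n
    consider "n = 0" | "n = 1" | k where "n = Suc (Suc k)" by (metis One_nat_def not0_implies_Suc)
    thus "coeff q n = coeff [:c0, 1:] n"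
    proof cases
      case 1 thus ?thesis by (simp add: c0_def)
    next
      case 2 thus ?thesis using q1 dq by simp
    next
      case 3 thus ?thesis using dq by (simp add: coeff_eq_0)
    qed
  qed
  have "coeffs q = [c0, 1]" unfolding c0 by simp
  hence "M = c0 \<cdot>\<^sub>m 1\<^sub>m r + G" unfolding M_def using mpe_lin[OF G, of c0] by (simp only:)
  hence "c0 \<cdot>\<^sub>m 1\<^sub>m r + G = 0\<^sub>m r r" using M0 by simp
  hence "g i l = (if i = l then - c0 else 0)" if "i < r" "l < r" for i l
  proof -
    assume eq: "c0 \<cdot>\<^sub>m 1\<^sub>m r + G = 0\<^sub>m r r"
    have "(c0 \<cdot>\<^sub>m 1\<^sub>m r + G) $$ (i, l) = 0" unfolding eq using that by simp
    moreover have "(c0 \<cdot>\<^sub>m 1\<^sub>m r + G) $$ (i, l) = c0 * (if i = l then 1 else 0) + g i l"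
      using that unfolding G_def by simp
    ultimately have "c0 * (if i = l then 1 else 0) + g i l = 0" by simp
    thus ?thesis by (cases "i = l") (simp_all add: eq_neg_iff_add_eq_0 add.commute)
  qed
  thus ?thesis by blast
qed


lemma scalar_Hgraph:
  fixes g :: "nat \<Rightarrow> nat \<Rightarrow> 'c::field"
  assumes r: "r \<ge> 2" and gm: "is_mat r g" and g0: "g \<noteq> mat_zero"
    and sc: "\<forall>i<r. \<forall>l<r. g i l = (if i = l then a else 0)"
  shows "Hgraph S r g = Hgraph S r (mat_one r)"
proof -
  have a0: "a \<noteq> 0"
  proof
    assume "a = 0"
    hence "g = mat_zero" using gm sc unfolding is_mat_def mat_zero_def
      by (intro ext) (metis not_le)
    thus False using g0 by simp
  qed
  have mv: "mat_vec r g x i = a * x i" if "i < r" for x i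
  proof -
    have "mat_vec r g x i = (\<Sum>l<r. if l = i then a * x i else 0)"
      unfolding mat_vec_def using sc that by (intro sum.cong) auto
    also have "\<dots> = a * x i" using that by simp
    finally show ?thesis .
  qed
  have act_eq: "act r g z = act r (mat_one r) z" if z: "z \<in> Omega S r" for z
  proof -
    have zv: "is_vec (r - 1) z" using z unfolding Omega_def by simp
    have "act r g z = z"
    proof
      fix i
      show "act r g z i = z i"
      proof (cases "i < r - 1")
        case True
        have "act r g z i = mat_vec r g (homog r z) i / mat_vec r g (homog r z) (r - 1)"
          unfolding act_def Let_def using True by simp
        also have "\<dots> = (a * z i) / (a * 1)" using True r by (simp add: mv homog_def)
        also have "\<dots> = z i" using a0 by simp
        finally show ?thesis .
      next
        case False thus ?thesis using zv unfolding act_def Let_def is_vec_def by simp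
      qed
    qed
    also have "\<dots> = act r (mat_one r) z" using act_one[OF zv] r by simp
    finally show ?thesis .
  qed
  show ?thesis unfolding Hgraph_def using act_eq by auto
qed

lemma Omega_nz:
  assumes S: "is_subfield S" and z: "z \<in> Omega S r" and r: "r \<ge> 2"
  shows "z \<noteq> (\<lambda>i. 0)"
proof
  assume z0: "z = (\<lambda>i. 0)"
  define c :: "nat \<Rightarrow> 'a" where "c = (\<lambda>i. if i = 0 then 1 else 0)"
  have "(\<forall>i<r. c i \<in> S) \<and> (\<exists>i<r. c i \<noteq> 0)"
    using S r unfolding c_def by (auto simp: sf_0 sf_1)
  hence "(\<Sum>i<r - 1. c i * z i) + c (r - 1) \<noteq> 0" using z unfolding Omega_def by blast
  moreover have "c (r - 1) = 0" using r unfolding c_def by simp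
  ultimately show False using z0 by simp
qed


type_synonym 'c mat = "nat \<Rightarrow> nat \<Rightarrow> 'c"
type_synonym 'c vec = "nat \<Rightarrow> 'c"

theorem lemma7p2:
  fixes av :: "'c::field \<Rightarrow> real" and k Kinf :: "'c set" and r :: nat
    and D :: "'c mat set" and \<gamma> :: "'c mat" and \<alpha> :: "'c vec \<times> 'c vec"
  assumes "function_field_setting av k Kinf"
    and "central_division_algebra_split k Kinf r D"
    and "prime r" and "r \<noteq> CHAR('c)"
    and "\<gamma> \<in> D" and "\<gamma> \<noteq> mat_zero"
    and "Hgraph Kinf r \<gamma> \<noteq> Hgraph Kinf r (mat_one r)"
    and "\<alpha> \<in> Hgraph Kinf r \<gamma> \<inter> Hgraph Kinf r (mat_one r)"
  shows "tangent_H av r \<gamma> \<alpha> \<inter> tangent_H av r (mat_one r) \<alpha> = {((\<lambda>i. 0), (\<lambda>i. 0))}"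
proof -
  note ffs = assms(1)[unfolded function_field_setting_def]
  have N: "nonarch_abs av" using ffs by blast
  have ac: "\<forall>p::'c poly. degree p > 0 \<longrightarrow> (\<exists>x. poly p x = 0)" using ffs by blast
  have S: "is_subfield Kinf" using ffs by blast
  obtain x where x: "av x \<noteq> 0" "av x \<noteq> 1" using ffs by blast
  have xpos: "av x > 0" using x av_nonneg[OF N, of x] by linarith
  obtain t where t: "0 < av t" "av t < 1"
  proof (cases "av x < 1")
    case True thus ?thesis using that xpos by blast
  next
    case False
    hence gt: "av x > 1" using x by simp
    have "av (1 / x) = 1 / av x" using av_divide[OF N, of 1 x] av_1[OF N] by simp
    thus ?thesis using that[of "1 / x"] gt by simp
  qed
  have r2: "r \<ge> 2" using assms(3) by (simp add: prime_ge_2_nat)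
  have ch: "(of_nat r :: 'c) \<noteq> 0"
  proof
    assume "(of_nat r :: 'c) = 0"
    hence "CHAR('c) dvd r" by (simp add: of_nat_eq_0_iff_char_dvd)
    hence "CHAR('c) = 1 \<or> CHAR('c) = r" using assms(3) unfolding prime_nat_iff by blast
    moreover have "CHAR('c) \<noteq> 1"
    proof
      assume "CHAR('c) = 1"
      hence "(of_nat 1 :: 'c) = 0" by (simp only: of_nat_eq_0_iff_char_dvd) simp
      thus False by simp
    qed
    ultimately show False using assms(4) by blast
  qed
  note cda = assms(2)[unfolded central_division_algebra_split_def]
  have gm: "is_mat r \<gamma>" and ent: "\<forall>i j. \<gamma> i j \<in> Kinf" using cda assms(5) by auto
  obtain z where z: "z \<in> Omega Kinf r" and \<alpha>z: "\<alpha> = (z, act r \<gamma> z)"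
    using assms(8) unfolding Hgraph_def by blast
  obtain z' where z': "z' \<in> Omega Kinf r" and \<alpha>z': "\<alpha> = (z', act r (mat_one r) z')"
    using assms(8) unfolding Hgraph_def by blast
  have zz: "z' = z" using \<alpha>z \<alpha>z' by simp
  have zv: "is_vec (r - 1) z" using z unfolding Omega_def by simp
  have fx: "act r \<gamma> z = z" using \<alpha>z \<alpha>z' zz act_one[OF zv] r2 by simp
  have fa: "fst \<alpha> = z" using \<alpha>z by simp
  have lam0: "mat_vec r \<gamma> (homog r z) (r - 1) \<noteq> 0"
  proof
    assume l0: "mat_vec r \<gamma> (homog r z) (r - 1) = 0"
    have "act r \<gamma> z = (\<lambda>i. 0)" unfolding act_def Let_def l0 by (simp add: fun_eq_iff)
    thus False using fx Omega_nz[OF S z r2] by simp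
  qed
  have m: "0 < r - 1" using r2 by simp
  have Dg: "has_deriv_at av (r - 1) (act r \<gamma>) (Lact r \<gamma> z) z"
    by (rule act_deriv[OF N r2 zv fx lam0])
  have D1: "has_deriv_at av (r - 1) (act r (mat_one r)) (\<lambda>v. v) z"
    by (rule id_deriv[OF N r2 zv])
  show ?thesis
  proof (rule equalityI[OF subsetI subsetI])
    fix p :: "(nat \<Rightarrow> 'c) \<times> (nat \<Rightarrow> 'c)" assume p: "p \<in> tangent_H av r \<gamma> \<alpha> \<inter> tangent_H av r (mat_one r) \<alpha>"
    obtain v w where pvw: "p = (v, w)" by (cases p)
    from p obtain L1 L2 where v: "is_vec (r - 1) v"
      and L1: "has_deriv_at av (r - 1) (act r \<gamma>) L1 z" "w = L1 v"
      and L2: "has_deriv_at av (r - 1) (act r (mat_one r)) L2 z" "w = L2 v"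
      unfolding tangent_H_def pvw fa by blast
    have "L1 v = Lact r \<gamma> z v" by (rule deriv_unique[OF N t m L1(1) Dg v])
    moreover have "L2 v = v" using deriv_unique[OF N t m L2(1) D1 v] by simp
    ultimately have Lv: "Lact r \<gamma> z v = v" and wv: "w = v" using L1(2) L2(2) by auto
    have "v = (\<lambda>i. 0)"
    proof (rule ccontr)
      assume "v \<noteq> (\<lambda>i. 0)"
      from core[OF S ac assms(3) ch ent z fx lam0 v this Lv]
      obtain a where "\<forall>i<r. \<forall>l<r. \<gamma> i l = (if i = l then a else 0)" by blast
      from scalar_Hgraph[OF r2 gm assms(6) this] show False using assms(7) by blast
    qed
    thus "p \<in> {((\<lambda>i. 0), (\<lambda>i. 0))}" using pvw wv by simp
  next
    fix p :: "(nat \<Rightarrow> 'c) \<times> (nat \<Rightarrow> 'c)" assume "p \<in> {((\<lambda>i. 0), (\<lambda>i. 0))}"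
    hence p: "p = ((\<lambda>i. 0), (\<lambda>i. 0))" by simp
    have L0: "Lact r \<gamma> z (\<lambda>i. 0) = (\<lambda>i. 0)" unfolding Lact_def mat_vec_def by (simp add: fun_eq_iff)
    have "p \<in> tangent_H av r \<gamma> \<alpha>" unfolding tangent_H_def p fa
      using Dg L0 by (auto simp: is_vec_def)
    moreover have "p \<in> tangent_H av r (mat_one r) \<alpha>" unfolding tangent_H_def p fa
      using D1 by (auto simp: is_vec_def)
    ultimately show "p \<in> tangent_H av r \<gamma> \<alpha> \<inter> tangent_H av r (mat_one r) \<alpha>" by simp
  qed
qed


end
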